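(* Let $\mathcal{M}$ be a Riemannian manifold with a retraction $R$, and for $x,y\in\mathcal{M}$, $r,t\in[0,1]$ let $c_r(t;x,y)=R_{q(r)}\big((1-t)R_{q(r)}^{-1}(x)+tR_{q(r)}^{-1}(y)\big)$ with $q(r)=R_x(rR_x^{-1}(y))$. Let $b_0,b_1,b_2,b_3\in\mathcal{M}$ and let $r_1:[0,1]\to[0,1]$, $r_{01},r_{12}:[0,1]^2\to[0,1]$ and $r_{012}:[0,1]^3\to[0,1]$ be smooth functions such that $$r_{01}(s,0)=0,\quad r_{12}(s,1)=1,\quad r_{012}(s,0,0)=0,\quad r_{012}(s,1,1)=1\qquad\text{for all } s\in[0,1].$$ Define $\beta_0(t)=c_0(t;b_0,b_1)$, $\beta_1(t)=c_{r_1(t)}(t;b_1,b_2)$, $\beta_2(t)=c_1(t;b_2,b_3)$, $\beta_{01}(s,t)=c_{r_{01}(s,t)}(s;\beta_0(t),\beta_1(t))$, $\beta_{12}(s,t)=c_{r_{12}(s,t)}(s;\beta_1(t),\beta_2(t))$, $\beta_{012}(u,s,t)=c_{r_{012}(u,s,t)}(u;\beta_{01}(s,t),\beta_{12}(s,t))$, and assume that all retractions and inverse retractions involved in these definitions are well-defined for all $u,s,t\in[0,1]$. Then: (a) $\beta_i(0)=b_i$, $\beta_i(1)=b_{i+1}$ ($i=0,1,2$); $\beta_{01}(0,t)=\beta_0(t)$, $\beta_{01}(1,t)=\beta_1(t)$, $\beta_{12}(0,t)=\beta_1(t)$, $\beta_{12}(1,t)=\beta_2(t)$, $\beta_{012}(0,s,t)=\beta_{01}(s,t)$,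 $\beta_{012}(1,s,t)=\beta_{12}(s,t)$ for all $s,t\in[0,1]$; (b) $\beta_{01}(s,0)=\beta_0(s)$, $\beta_{12}(s,1)=\beta_2(s)$, $\beta_{012}(s,0,0)=\beta_0(s)$ and $\beta_{012}(s,1,1)=\beta_2(s)$ for all $s\in[0,1]$; (c) the curve $\beta(t)=\beta_{012}(t,t,t)$ satisfies $\beta(0)=b_0$, $\beta(1)=b_3$, $$\dot\beta(0)=3\dot c_0(0;b_0,b_1)=3R_{b_0}^{-1}(b_1),\qquad \dot\beta(1)=3\dot c_1(1;b_2,b_3)=-3R_{b_3}^{-1}(b_2).$$
   Context: A retraction on $\mathcal{M}$ is a smooth map $R$ from an open subset of $T\mathcal{M}$ containing all zero tangent vectors into $\mathcal{M}$, written $R_x(v)=R(x,v)$, such that $R_x(0)=x$ and $\mathrm{D}R_x(0)$ is the identity of $T_x\mathcal{M}$; $R_x^{-1}$ denotes its local inverse near $0\in T_x\mathcal{M}$. A dot denotes differentiation with respect to the curve parameter. *)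

theory Defs
  imports "HOL-Analysis.Analysis"
begin

definition smooth_open :: "'a::real_normed_vector set \<Rightarrow> ('a \<Rightarrow> 'b::real_normed_vector) \<Rightarrow> bool" where
  "smooth_open V f \<longleftrightarrow> open V \<and>
     (\<exists>F :: 'a list \<Rightarrow> 'a \<Rightarrow> 'b.
        (\<forall>x\<in>V. F [] x = f x) \<and>
        (\<forall>vs. continuous_on V (F vs) \<and>
              (\<forall>x\<in>V. (F vs has_derivative (\<lambda>v. F (v # vs) x)) (at x))))"

definition smooth_on :: "'a::real_normed_vector set \<Rightarrow> ('a \<Rightarrow> 'b::real_normed_vector) \<Rightarrow> bool" where
  "smooth_on S f \<longleftrightarrow>
     (\<forall>x\<in>S. \<exists>V g. x \<in> V \<and> smooth_open V g \<and> (\<forall>y\<in>S \<inter> V. g y = f y))"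

definition embedded_submanifold :: "'a::euclidean_space set \<Rightarrow> bool" where
  "embedded_submanifold M \<longleftrightarrow>
     (\<forall>p\<in>M. \<exists>U V (\<phi>::'a \<Rightarrow> 'a) \<psi> L. open U \<and> p \<in> U \<and> open V \<and> subspace L \<and>
        smooth_open U \<phi> \<and> smooth_open V \<psi> \<and> \<phi> ` U = V \<and>
        (\<forall>x\<in>U. \<psi> (\<phi> x) = x) \<and> (\<forall>y\<in>V. \<phi> (\<psi> y) = y) \<and>
        \<phi> ` (M \<inter> U) = V \<inter> L)"

definition tangent_space :: "'a::euclidean_space set \<Rightarrow> 'a \<Rightarrow> 'a set" where
  "tangent_space M x = {v. \<exists>\<gamma> e. 0 < e \<and> smooth_on {-e<..<e} \<gamma> \<and> \<gamma> ` {-e<..<e} \<subseteq> M \<and>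
       \<gamma> 0 = x \<and> (\<gamma> has_vector_derivative v) (at 0)}"

definition tangent_bundle :: "'a::euclidean_space set \<Rightarrow> ('a \<times> 'a) set" where
  "tangent_bundle M = Sigma M (tangent_space M)"

definition manifold_retraction :: "'a::euclidean_space set \<Rightarrow> ('a \<Rightarrow> 'a \<Rightarrow> 'a) \<Rightarrow> ('a \<times> 'a) set \<Rightarrow> bool" where
  "manifold_retraction M R DR \<longleftrightarrow>
     DR \<subseteq> tangent_bundle M \<and> openin (top_of_set (tangent_bundle M)) DR \<and>
     (\<forall>x\<in>M. (x, 0) \<in> DR) \<and>
     smooth_on DR (\<lambda>(x, v). R x v) \<and>
     (\<forall>(x, v)\<in>DR. R x v \<in> M) \<and>
     (\<forall>x\<in>M. R x 0 = x) \<and>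
     (\<forall>x\<in>M. (R x has_derivative (\<lambda>v. v)) (at 0 within tangent_space M x))"

text \<open>Rinv is a local inverse of R near the zero section: (x,v) \<mapsto> (x, R x v) is a
  bijection from DI (neighbourhood of the zero section inside DR) onto W (open in M \<times> M),
  with smooth inverse (x,y) \<mapsto> (x, Rinv x y).\<close>
definition retraction_local_inverse ::
  "'a::euclidean_space set \<Rightarrow> ('a \<Rightarrow> 'a \<Rightarrow> 'a) \<Rightarrow> ('a \<times> 'a) set \<Rightarrow>
   ('a \<Rightarrow> 'a \<Rightarrow> 'a) \<Rightarrow> ('a \<times> 'a) set \<Rightarrow> ('a \<times> 'a) set \<Rightarrow> bool" where
  "retraction_local_inverse M R DR Rinv DI W \<longleftrightarrow>
     DI \<subseteq> DR \<and> openin (top_of_set (tangent_bundle M)) DI \<and> (\<forall>x\<in>M. (x, 0) \<in> DI) \<and>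
     W \<subseteq> M \<times> M \<and> openin (top_of_set (M \<times> M)) W \<and>
     (\<forall>(x, v)\<in>DI. (x, R x v) \<in> W \<and> Rinv x (R x v) = v) \<and>
     (\<forall>(x, y)\<in>W. (x, Rinv x y) \<in> DI \<and> R x (Rinv x y) = y) \<and>
     smooth_on W (\<lambda>(x, y). Rinv x y)"

definition ret_q :: "('a::real_vector \<Rightarrow> 'a \<Rightarrow> 'a) \<Rightarrow> ('a \<Rightarrow> 'a \<Rightarrow> 'a) \<Rightarrow> real \<Rightarrow> 'a \<Rightarrow> 'a \<Rightarrow> 'a" where
  "ret_q R Rinv r x y = R x (r *\<^sub>R Rinv x y)"

definition ret_curve :: "('a::real_vector \<Rightarrow> 'a \<Rightarrow> 'a) \<Rightarrow> ('a \<Rightarrow> 'a \<Rightarrow> 'a) \<Rightarrow> real \<Rightarrow> real \<Rightarrow> 'a \<Rightarrow> 'a \<Rightarrow> 'a" where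
  "ret_curve R Rinv r t x y =
     (let q = ret_q R Rinv r x y in R q ((1 - t) *\<^sub>R Rinv q x + t *\<^sub>R Rinv q y))"

definition ret_curve_wd :: "('a::real_vector \<Rightarrow> 'a \<Rightarrow> 'a) \<Rightarrow> ('a \<times> 'a) set \<Rightarrow> ('a \<Rightarrow> 'a \<Rightarrow> 'a) \<Rightarrow>
    ('a \<times> 'a) set \<Rightarrow> real \<Rightarrow> real \<Rightarrow> 'a \<Rightarrow> 'a \<Rightarrow> bool" where
  "ret_curve_wd R DR Rinv W r t x y \<longleftrightarrow>
     (let q = ret_q R Rinv r x y in
       (x, y) \<in> W \<and> (x, r *\<^sub>R Rinv x y) \<in> DR \<and> (q, x) \<in> W \<and> (q, y) \<in> W \<and>
       (q, (1 - t) *\<^sub>R Rinv q x + t *\<^sub>R Rinv q y) \<in> DR)"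

end

theory Submission
  imports Defs
begin


lemma smooth_comp_diff:
  fixes \<Phi> :: "'b::real_normed_vector \<Rightarrow> 'c::real_normed_vector" and H :: "'d::real_normed_vector \<Rightarrow> 'b"
  assumes sm: "smooth_on A \<Phi>" and Hd: "H differentiable (at p within S)"
    and HA: "\<forall>z\<in>S. H z \<in> A" and pS: "p \<in> S"
  shows "(\<lambda>z. \<Phi> (H z)) differentiable (at p within S)"
proof -
  have "H p \<in> A" using HA pS by blast
  then obtain V g where V: "H p \<in> V" "smooth_open V g" "\<forall>y\<in>A\<inter>V. g y = \<Phi> y"
    using sm unfolding smooth_on_def by blast
  from V(2) obtain F where oV: "open V" and F0: "\<forall>x\<in>V. F [] x = g x"
    and FD: "\<forall>x\<in>V. (F [] has_derivative (\<lambda>v. F [v] x)) (at x)"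
    unfolding smooth_open_def by blast
  have gD: "(g has_derivative (\<lambda>v. F [v] (H p))) (at (H p))"
    using has_derivative_transform_within_open[OF FD[rule_format, OF V(1)] oV V(1)] F0 by blast
  have gd: "g differentiable (at (H p))" using gD unfolding differentiable_def by blast
  have c1: "(\<lambda>z. g (H z)) differentiable (at p within S)"
    by (rule differentiable_compose[OF gd Hd])
  then obtain D where D: "((\<lambda>z. g (H z)) has_derivative D) (at p within S)"
    unfolding differentiable_def by blast
  have cont: "continuous (at p within S) H" by (rule differentiable_imp_continuous_within[OF Hd])
  obtain e where e: "e > 0" "ball (H p) e \<subseteq> V" using oV V(1) open_contains_ball by blast
  obtain d where d: "d > 0" "\<forall>x'\<in>S. dist x' p < d \<longrightarrow> dist (H x') (H p) < e"
    using cont e(1) unfolding continuous_within_eps_delta by blast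
  have "((\<lambda>z. \<Phi> (H z)) has_derivative D) (at p within S)"
  proof (rule has_derivative_transform_within[OF D d(1) pS])
    fix x' assume x': "x' \<in> S" "dist x' p < d"
    then have "H x' \<in> ball (H p) e" using d(2) x' by (metis dist_commute mem_ball)
    then have "H x' \<in> V" using e(2) by blast
    then show "g (H x') = \<Phi> (H x')" using V(3) HA x'(1) by blast
  qed
  then show ?thesis unfolding differentiable_def by blast
qed

lemma curve_diff:
  fixes r t :: "'d::real_normed_vector \<Rightarrow> real" and x y :: "'d \<Rightarrow> 'a::real_normed_vector"
  assumes sR: "smooth_on DR (\<lambda>(x, v). R x v)" and sI: "smooth_on W (\<lambda>(x, y). Rinv x y)"
    and dr: "r differentiable (at p within S)" and dt: "t differentiable (at p within S)"
    and dx: "x differentiable (at p within S)" and dy: "y differentiable (at p within S)"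
    and wd: "\<forall>z\<in>S. ret_curve_wd R DR Rinv W (r z) (t z) (x z) (y z)" and pS: "p \<in> S"
  shows "(\<lambda>z. ret_curve R Rinv (r z) (t z) (x z) (y z)) differentiable (at p within S)"
proof -
  have da: "(\<lambda>z. Rinv (x z) (y z)) differentiable (at p within S)"
    using smooth_comp_diff[OF sI, of "\<lambda>z. (x z, y z)" p S] dx dy wd pS
    by (auto simp: ret_curve_wd_def Let_def)
  have dq: "(\<lambda>z. ret_q R Rinv (r z) (x z) (y z)) differentiable (at p within S)"
    using smooth_comp_diff[OF sR, of "\<lambda>z. (x z, r z *\<^sub>R Rinv (x z) (y z))" p S] dx dr da wd pS
    by (auto simp: ret_curve_wd_def Let_def ret_q_def)
  have d1: "(\<lambda>z. Rinv (ret_q R Rinv (r z) (x z) (y z)) (x z)) differentiable (at p within S)"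
    using smooth_comp_diff[OF sI, of "\<lambda>z. (ret_q R Rinv (r z) (x z) (y z), x z)" p S] dx dq wd pS
    by (auto simp: ret_curve_wd_def Let_def)
  have d2: "(\<lambda>z. Rinv (ret_q R Rinv (r z) (x z) (y z)) (y z)) differentiable (at p within S)"
    using smooth_comp_diff[OF sI, of "\<lambda>z. (ret_q R Rinv (r z) (x z) (y z), y z)" p S] dy dq wd pS
    by (auto simp: ret_curve_wd_def Let_def)
  have dv: "(\<lambda>z. (1 - t z) *\<^sub>R Rinv (ret_q R Rinv (r z) (x z) (y z)) (x z)
      + t z *\<^sub>R Rinv (ret_q R Rinv (r z) (x z) (y z)) (y z)) differentiable (at p within S)"
    using d1 d2 dt by (intro derivative_intros) auto
  show ?thesis
    using smooth_comp_diff[OF sR, of "\<lambda>z. (ret_q R Rinv (r z) (x z) (y z), (1 - t z) *\<^sub>R Rinv (ret_q R Rinv (r z) (x z) (y z)) (x z)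
      + t z *\<^sub>R Rinv (ret_q R Rinv (r z) (x z) (y z)) (y z))" p S] dq dv wd pS
    by (auto simp: ret_curve_wd_def Let_def ret_curve_def)
qed

lemma diag_deriv:
  fixes F :: "real \<times> real \<times> real \<Rightarrow> 'a::real_normed_vector"
  assumes FD: "(F has_derivative L) (at (c, c, c) within {0..1} \<times> {0..1} \<times> {0..1})"
    and c: "c \<in> {0..1}"
    and e1: "\<forall>u\<in>{0..1}. F (u, c, c) = g u"
    and e2: "\<forall>u\<in>{0..1}. F (c, u, c) = g u"
    and e3: "\<forall>u\<in>{0..1}. F (c, c, u) = g u"
    and gd: "(g has_vector_derivative v) (at c within {0..1})"
  shows "((\<lambda>t. F (t, t, t)) has_vector_derivative 3 *\<^sub>R v) (at c within {0..1})"
proof -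
  have lin: "linear L" using FD has_derivative_linear by blast
  have gD: "(g has_derivative (\<lambda>h. h *\<^sub>R v)) (at c within cbox 0 1)"
    using gd unfolding has_vector_derivative_def by simp
  have gen: "L (f' 1) = v"
    if f: "(f has_derivative f') (at c within {0..1})" and fS: "f ` {0..1} \<subseteq> {0..1} \<times> {0..1} \<times> {0..1}"
      and fc: "f c = (c, c, c)" and eq: "\<forall>u\<in>{0..1}. F (f u) = g u"
    for f :: "real \<Rightarrow> real \<times> real \<times> real" and f'
  proof -
    have "(F has_derivative L) (at (f c) within f ` {0..1})"
      using has_derivative_subset[OF FD fS] fc by simp
    then have "((F \<circ> f) has_derivative (L \<circ> f')) (at c within {0..1})"
      by (rule diff_chain_within[OF f])
    then have "(g has_derivative (L \<circ> f')) (at c within {0..1})"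
      by (rule has_derivative_transform_within[of _ _ _ _ 1]) (use c eq in auto)
    then have "(g has_derivative (L \<circ> f')) (at c within cbox 0 1)" by simp
    then have "(L \<circ> f') = (\<lambda>h. h *\<^sub>R v)"
      using frechet_derivative_unique_within_closed_interval[OF _ _ _ gD] c by auto
    then show ?thesis by (metis comp_apply scaleR_one)
  qed
  have l1: "L (1, 0, 0) = v"
  proof (rule gen)
    show "((\<lambda>u. (u, c, c)) has_derivative (\<lambda>h. (h, 0, 0))) (at c within {0..1})"
      by (auto intro!: derivative_eq_intros simp: zero_prod_def)
  qed (use e1 c in auto)
  have l2: "L (0, 1, 0) = v"
  proof (rule gen)
    show "((\<lambda>u. (c, u, c)) has_derivative (\<lambda>h. (0, h, 0))) (at c within {0..1})"
      by (auto intro!: derivative_eq_intros simp: zero_prod_def)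
  qed (use e2 c in auto)
  have l3: "L (0, 0, 1) = v"
  proof (rule gen)
    show "((\<lambda>u. (c, c, u)) has_derivative (\<lambda>h. (0, 0, h))) (at c within {0..1})"
      by (auto intro!: derivative_eq_intros simp: zero_prod_def)
  qed (use e3 c in auto)
  have "(1::real, 1::real, 1::real) = (1, 0, 0) + (0, 1, 0) + (0, 0, 1)" by simp
  then have "L (1, 1, 1) = L (1, 0, 0) + L (0, 1, 0) + L (0, 0, 1)"
    using linear_add[OF lin] by metis
  also have "\<dots> = (1 + 1 + 1) *\<^sub>R v" using l1 l2 l3 by (simp only: scaleR_add_left scaleR_one)
  also have "\<dots> = 3 *\<^sub>R v" by simp
  finally have L111: "L (1, 1, 1) = 3 *\<^sub>R v" .
  have dg: "((\<lambda>t. (t, t, t)) has_derivative (\<lambda>h. (h, h, h))) (at c within {0..1})"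
    by (auto intro!: derivative_eq_intros)
  have "(F has_derivative L) (at ((\<lambda>t. (t, t, t)) c) within (\<lambda>t. (t, t, t)) ` {0..1})"
    by (rule has_derivative_subset[OF FD]) auto
  from diff_chain_within[OF dg this]
  have "((\<lambda>t. F (t, t, t)) has_derivative (\<lambda>h. L (h, h, h))) (at c within {0..1})"
    by (simp add: o_def)
  moreover have "(\<lambda>h. L (h, h, h)) = (\<lambda>h. h *\<^sub>R (3 *\<^sub>R v))"
  proof
    fix h :: real
    have "L (h, h, h) = L (h *\<^sub>R (1, 1, 1))" by simp
    also have "\<dots> = h *\<^sub>R L (1, 1, 1)" using linear_scale[OF lin] by blast
    finally show "L (h, h, h) = h *\<^sub>R (3 *\<^sub>R v)" using L111 by simp
  qed
  ultimately show ?thesis unfolding has_vector_derivative_def by simp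
qed

theorem proposition2p4:
  fixes M :: "'a::euclidean_space set"
    and R Rinv :: "'a \<Rightarrow> 'a \<Rightarrow> 'a"
    and DR DI W :: "('a \<times> 'a) set"
    and b0 b1 b2 b3 :: 'a
    and r1 :: "real \<Rightarrow> real" and r01 r12 :: "real \<Rightarrow> real \<Rightarrow> real"
    and r012 :: "real \<Rightarrow> real \<Rightarrow> real \<Rightarrow> real"
    and \<beta>0 \<beta>1 \<beta>2 \<beta> :: "real \<Rightarrow> 'a"
    and \<beta>01 \<beta>12 :: "real \<Rightarrow> real \<Rightarrow> 'a"
    and \<beta>012 :: "real \<Rightarrow> real \<Rightarrow> real \<Rightarrow> 'a"
  assumes M: "embedded_submanifold M"
    and R: "manifold_retraction M R DR"
    and Rinv: "retraction_local_inverse M R DR Rinv DI W"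
    and b: "b0 \<in> M" "b1 \<in> M" "b2 \<in> M" "b3 \<in> M"
    and r1: "smooth_on {0..1} r1" "\<forall>t\<in>{0..1}. r1 t \<in> {0..1}"
    and r01: "smooth_on ({0..1} \<times> {0..1}) (\<lambda>(s, t). r01 s t)"
             "\<forall>s\<in>{0..1}. \<forall>t\<in>{0..1}. r01 s t \<in> {0..1}"
    and r12: "smooth_on ({0..1} \<times> {0..1}) (\<lambda>(s, t). r12 s t)"
             "\<forall>s\<in>{0..1}. \<forall>t\<in>{0..1}. r12 s t \<in> {0..1}"
    and r012: "smooth_on ({0..1} \<times> {0..1} \<times> {0..1}) (\<lambda>(u, s, t). r012 u s t)"
              "\<forall>u\<in>{0..1}. \<forall>s\<in>{0..1}. \<forall>t\<in>{0..1}. r012 u s t \<in> {0..1}"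
    and bc: "\<forall>s\<in>{0..1}. r01 s 0 = 0 \<and> r12 s 1 = 1 \<and> r012 s 0 0 = 0 \<and> r012 s 1 1 = 1"
    and def_\<beta>0: "\<beta>0 = (\<lambda>t. ret_curve R Rinv 0 t b0 b1)"
    and def_\<beta>1: "\<beta>1 = (\<lambda>t. ret_curve R Rinv (r1 t) t b1 b2)"
    and def_\<beta>2: "\<beta>2 = (\<lambda>t. ret_curve R Rinv 1 t b2 b3)"
    and def_\<beta>01: "\<beta>01 = (\<lambda>s t. ret_curve R Rinv (r01 s t) s (\<beta>0 t) (\<beta>1 t))"
    and def_\<beta>12: "\<beta>12 = (\<lambda>s t. ret_curve R Rinv (r12 s t) s (\<beta>1 t) (\<beta>2 t))"
    and def_\<beta>012: "\<beta>012 = (\<lambda>u s t. ret_curve R Rinv (r012 u s t) u (\<beta>01 s t) (\<beta>12 s t))"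
    and def_\<beta>: "\<beta> = (\<lambda>t. \<beta>012 t t t)"
    and wd: "\<forall>u\<in>{0..1}. \<forall>s\<in>{0..1}. \<forall>t\<in>{0..1}.
      ret_curve_wd R DR Rinv W 0 t b0 b1 \<and>
      ret_curve_wd R DR Rinv W (r1 t) t b1 b2 \<and>
      ret_curve_wd R DR Rinv W 1 t b2 b3 \<and>
      ret_curve_wd R DR Rinv W (r01 s t) s (\<beta>0 t) (\<beta>1 t) \<and>
      ret_curve_wd R DR Rinv W (r12 s t) s (\<beta>1 t) (\<beta>2 t) \<and>
      ret_curve_wd R DR Rinv W (r012 u s t) u (\<beta>01 s t) (\<beta>12 s t)"
  shows
    "(\<beta>0 0 = b0 \<and> \<beta>0 1 = b1 \<and> \<beta>1 0 = b1 \<and> \<beta>1 1 = b2 \<and> \<beta>2 0 = b2 \<and> \<beta>2 1 = b3 \<and>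
      (\<forall>s\<in>{0..1}. \<forall>t\<in>{0..1}.
         \<beta>01 0 t = \<beta>0 t \<and> \<beta>01 1 t = \<beta>1 t \<and> \<beta>12 0 t = \<beta>1 t \<and> \<beta>12 1 t = \<beta>2 t \<and>
         \<beta>012 0 s t = \<beta>01 s t \<and> \<beta>012 1 s t = \<beta>12 s t))
   \<and> (\<forall>s\<in>{0..1}. \<beta>01 s 0 = \<beta>0 s \<and> \<beta>12 s 1 = \<beta>2 s \<and>
         \<beta>012 s 0 0 = \<beta>0 s \<and> \<beta>012 s 1 1 = \<beta>2 s)
   \<and> (\<beta> 0 = b0 \<and> \<beta> 1 = b3 \<and>
      (\<beta> has_vector_derivative 3 *\<^sub>R Rinv b0 b1) (at 0 within {0..1}) \<and>
      ((\<lambda>t. ret_curve R Rinv 0 t b0 b1) has_vector_derivative Rinv b0 b1) (at 0 within {0..1}) \<and>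
      (\<beta> has_vector_derivative - (3 *\<^sub>R Rinv b3 b2)) (at 1 within {0..1}) \<and>
      ((\<lambda>t. ret_curve R Rinv 1 t b2 b3) has_vector_derivative - Rinv b3 b2) (at 1 within {0..1}))"
proof -
  have WM: "W \<subseteq> M \<times> M" and WI: "\<forall>(x, y)\<in>W. (x, Rinv x y) \<in> DI \<and> R x (Rinv x y) = y"
    and DIR: "DI \<subseteq> DR" and DI0: "\<forall>x\<in>M. (x, 0) \<in> DI"
    and DIinv: "\<forall>(x, v)\<in>DI. (x, R x v) \<in> W \<and> Rinv x (R x v) = v"
    and sI: "smooth_on W (\<lambda>(x, y). Rinv x y)"
    using Rinv unfolding retraction_local_inverse_def by auto
  have DRT: "DR \<subseteq> tangent_bundle M" and R0: "\<forall>x\<in>M. R x 0 = x"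
    and sR: "smooth_on DR (\<lambda>(x, v). R x v)"
    and RD: "\<forall>x\<in>M. (R x has_derivative (\<lambda>v. v)) (at 0 within tangent_space M x)"
    using R unfolding manifold_retraction_def by auto
  have Rinv0: "Rinv x x = 0" if "x \<in> M" for x
    using DI0 DIinv R0 that by fastforce
  have E: "ret_curve R Rinv r 0 x y = x \<and> ret_curve R Rinv r 1 x y = y"
    if "ret_curve_wd R DR Rinv W r t x y" for r t x y
    using that WI unfolding ret_curve_wd_def ret_curve_def Let_def by auto
  have W: "ret_curve_wd R DR Rinv W 0 t b0 b1 \<and>
      ret_curve_wd R DR Rinv W (r1 t) t b1 b2 \<and>
      ret_curve_wd R DR Rinv W 1 t b2 b3 \<and>
      ret_curve_wd R DR Rinv W (r01 s t) s (\<beta>0 t) (\<beta>1 t) \<and>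
      ret_curve_wd R DR Rinv W (r12 s t) s (\<beta>1 t) (\<beta>2 t) \<and>
      ret_curve_wd R DR Rinv W (r012 u s t) u (\<beta>01 s t) (\<beta>12 s t)"
    if "u \<in> {0..1}" "s \<in> {0..1}" "t \<in> {0..1}" for u s t
    using wd that by blast
  have I01: "(0::real) \<in> {0..1}" "(1::real) \<in> {0..1}" by auto
  have a0: "\<beta>0 0 = b0" "\<beta>0 1 = b1" "\<beta>1 0 = b1" "\<beta>1 1 = b2" "\<beta>2 0 = b2" "\<beta>2 1 = b3"
    using E[OF conjunct1[OF W[OF I01(1) I01(1) I01(1)]]]
      E[OF conjunct1[OF conjunct2[OF W[OF I01(1) I01(1) I01(1)]]]]
      E[OF conjunct1[OF conjunct2[OF W[OF I01(1) I01(1) I01(2)]]]]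
      E[OF conjunct1[OF conjunct2[OF conjunct2[OF W[OF I01(1) I01(1) I01(1)]]]]]
    by (simp_all add: def_\<beta>0 def_\<beta>1 def_\<beta>2)
  have a1: "\<beta>01 0 t = \<beta>0 t \<and> \<beta>01 1 t = \<beta>1 t \<and> \<beta>12 0 t = \<beta>1 t \<and> \<beta>12 1 t = \<beta>2 t \<and>
         \<beta>012 0 s t = \<beta>01 s t \<and> \<beta>012 1 s t = \<beta>12 s t"
    if st: "s \<in> {0..1}" "t \<in> {0..1}" for s t
  proof -
    have w1: "ret_curve_wd R DR Rinv W (r01 0 t) 0 (\<beta>0 t) (\<beta>1 t)"
      "ret_curve_wd R DR Rinv W (r12 0 t) 0 (\<beta>1 t) (\<beta>2 t)"
      "ret_curve_wd R DR Rinv W (r012 0 s t) 0 (\<beta>01 s t) (\<beta>12 s t)"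
      "ret_curve_wd R DR Rinv W (r01 1 t) 1 (\<beta>0 t) (\<beta>1 t)"
      "ret_curve_wd R DR Rinv W (r12 1 t) 1 (\<beta>1 t) (\<beta>2 t)"
      "ret_curve_wd R DR Rinv W (r012 1 s t) 1 (\<beta>01 s t) (\<beta>12 s t)"
      using W[OF I01(1) I01(1) st(2)] W[OF I01(1) st] W[OF I01(1) I01(2) st(2)] W[OF I01(2) st] by auto
    show ?thesis using E[OF w1(1)] E[OF w1(2)] E[OF w1(3)] E[OF w1(4)] E[OF w1(5)] E[OF w1(6)]
      by (simp add: def_\<beta>01 def_\<beta>12 def_\<beta>012)
  qed
  have bpart: "\<beta>01 s 0 = \<beta>0 s \<and> \<beta>12 s 1 = \<beta>2 s \<and> \<beta>012 s 0 0 = \<beta>0 s \<and> \<beta>012 s 1 1 = \<beta>2 s"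
    if s: "s \<in> {0..1}" for s
  proof -
    have "\<beta>01 0 0 = b0" "\<beta>12 0 0 = b1" "\<beta>01 1 1 = b2" "\<beta>12 1 1 = b3"
      using a1[OF I01(1) I01(1)] a1[OF I01(2) I01(2)] a0 by auto
    then show ?thesis using bc s a0 by (simp add: def_\<beta>01 def_\<beta>12 def_\<beta>012 def_\<beta>0 def_\<beta>2)
  qed
  have c0: "\<beta> 0 = b0" "\<beta> 1 = b3"
    using a1[OF I01(1) I01(1)] a1[OF I01(2) I01(2)] a0 by (auto simp: def_\<beta>)
  have b0M: "b0 \<in> M" and b3M: "b3 \<in> M" using b by auto
  have \<beta>0_eq: "\<beta>0 = (\<lambda>t. R b0 (t *\<^sub>R Rinv b0 b1))"
    using R0 Rinv0 b0M by (auto simp: def_\<beta>0 ret_curve_def ret_q_def Let_def)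
  have b23W: "(b2, b3) \<in> W"
    using W[OF I01(1) I01(1) I01(1)] by (simp add: ret_curve_wd_def Let_def)
  have \<beta>2_eq: "\<beta>2 = (\<lambda>t. R b3 ((1 - t) *\<^sub>R Rinv b3 b2))"
    using R0 Rinv0 b3M WI b23W by (auto simp: def_\<beta>2 ret_curve_def ret_q_def Let_def)
  have TS0: "t *\<^sub>R Rinv b0 b1 \<in> tangent_space M b0" if "t \<in> {0..1}" for t
  proof -
    have "(b0, t *\<^sub>R Rinv b0 b1) \<in> DR"
      using conjunct1[OF W[OF I01(1) I01(1) that]] R0 Rinv0 b0M
      by (simp add: ret_curve_wd_def Let_def ret_q_def)
    then show ?thesis using DRT unfolding tangent_bundle_def by auto
  qed
  have TS3: "(1 - t) *\<^sub>R Rinv b3 b2 \<in> tangent_space M b3" if "t \<in> {0..1}" for t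
  proof -
    have "(b3, (1 - t) *\<^sub>R Rinv b3 b2) \<in> DR"
      using conjunct1[OF conjunct2[OF conjunct2[OF W[OF I01(1) I01(1) that]]]] R0 Rinv0 b3M WI b23W
      by (auto simp: ret_curve_wd_def Let_def ret_q_def)
    then show ?thesis using DRT unfolding tangent_bundle_def by auto
  qed
  have d\<beta>0: "(\<beta>0 has_vector_derivative Rinv b0 b1) (at 0 within {0..1})"
  proof -
    have f: "((\<lambda>t. t *\<^sub>R Rinv b0 b1) has_derivative (\<lambda>h. h *\<^sub>R Rinv b0 b1)) (at 0 within {0..1})"
      by (auto intro!: derivative_eq_intros)
    have "(R b0 has_derivative (\<lambda>v. v)) (at ((\<lambda>t. t *\<^sub>R Rinv b0 b1) 0) within (\<lambda>t. t *\<^sub>R Rinv b0 b1) ` {0..1})"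
      using has_derivative_subset[OF RD[rule_format, OF b0M], of "(\<lambda>t. t *\<^sub>R Rinv b0 b1) ` {0..1}"] TS0 by (force simp: image_subset_iff)
    from diff_chain_within[OF f this] show ?thesis
      unfolding has_vector_derivative_def \<beta>0_eq by (simp add: o_def)
  qed
  have d\<beta>2: "(\<beta>2 has_vector_derivative - Rinv b3 b2) (at 1 within {0..1})"
  proof -
    have f: "((\<lambda>t. (1 - t) *\<^sub>R Rinv b3 b2) has_derivative (\<lambda>h. - (h *\<^sub>R Rinv b3 b2))) (at 1 within {0..1})"
      by (auto intro!: derivative_eq_intros)
    have "(R b3 has_derivative (\<lambda>v. v)) (at ((\<lambda>t. (1 - t) *\<^sub>R Rinv b3 b2) 1) within (\<lambda>t. (1 - t) *\<^sub>R Rinv b3 b2) ` {0..1})"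
      using has_derivative_subset[OF RD[rule_format, OF b3M], of "(\<lambda>t. (1 - t) *\<^sub>R Rinv b3 b2) ` {0..1}"] TS3 by (force simp: image_subset_iff)
    from diff_chain_within[OF f this] show ?thesis
      unfolding has_vector_derivative_def \<beta>2_eq by (simp add: o_def)
  qed
  let ?C = "{0..1::real} \<times> {0..1::real} \<times> {0..1::real}"
  have Fdiff: "(\<lambda>z. \<beta>012 (fst z) (fst (snd z)) (snd (snd z))) differentiable (at p within ?C)"
    if pC: "p \<in> ?C" for p
  proof -
    have Wz: "\<forall>z\<in>?C. ret_curve_wd R DR Rinv W 0 (snd (snd z)) b0 b1 \<and>
      ret_curve_wd R DR Rinv W (r1 (snd (snd z))) (snd (snd z)) b1 b2 \<and>
      ret_curve_wd R DR Rinv W 1 (snd (snd z)) b2 b3 \<and>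
      ret_curve_wd R DR Rinv W (r01 (fst (snd z)) (snd (snd z))) (fst (snd z)) (\<beta>0 (snd (snd z))) (\<beta>1 (snd (snd z))) \<and>
      ret_curve_wd R DR Rinv W (r12 (fst (snd z)) (snd (snd z))) (fst (snd z)) (\<beta>1 (snd (snd z))) (\<beta>2 (snd (snd z))) \<and>
      ret_curve_wd R DR Rinv W (r012 (fst z) (fst (snd z)) (snd (snd z))) (fst z) (\<beta>01 (fst (snd z)) (snd (snd z))) (\<beta>12 (fst (snd z)) (snd (snd z)))"
      using W by (auto simp: mem_Times_iff)
    have dU: "(\<lambda>z::real \<times> real \<times> real. fst z) differentiable (at p within ?C)"
      using has_derivative_fst[OF has_derivative_ident] unfolding differentiable_def by blast
    have dS: "(\<lambda>z::real \<times> real \<times> real. fst (snd z)) differentiable (at p within ?C)"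
      using has_derivative_fst[OF has_derivative_snd[OF has_derivative_ident]] unfolding differentiable_def by blast
    have dT: "(\<lambda>z::real \<times> real \<times> real. snd (snd z)) differentiable (at p within ?C)"
      using has_derivative_snd[OF has_derivative_snd[OF has_derivative_ident]] unfolding differentiable_def by blast
    have dSnd: "(\<lambda>z::real \<times> real \<times> real. snd z) differentiable (at p within ?C)"
      using has_derivative_snd[OF has_derivative_ident] unfolding differentiable_def by blast
    have dr1: "(\<lambda>z::real \<times> real \<times> real. r1 (snd (snd z))) differentiable (at p within ?C)"
      using smooth_comp_diff[OF r1(1) dT _ pC] by (auto simp: mem_Times_iff)
    have dr01: "(\<lambda>z::real \<times> real \<times> real. r01 (fst (snd z)) (snd (snd z))) differentiable (at p within ?C)"
      using smooth_comp_diff[OF r01(1), of "\<lambda>z. snd z" p ?C] dSnd pC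
      by (auto simp: mem_Times_iff case_prod_beta)
    have dr12: "(\<lambda>z::real \<times> real \<times> real. r12 (fst (snd z)) (snd (snd z))) differentiable (at p within ?C)"
      using smooth_comp_diff[OF r12(1), of "\<lambda>z. snd z" p ?C] dSnd pC
      by (auto simp: mem_Times_iff case_prod_beta)
    have dr012: "(\<lambda>z::real \<times> real \<times> real. r012 (fst z) (fst (snd z)) (snd (snd z))) differentiable (at p within ?C)"
      using smooth_comp_diff[OF r012(1), of "\<lambda>z. z" p ?C] pC
      by (simp add: case_prod_beta)
    have d0: "(\<lambda>z::real \<times> real \<times> real. \<beta>0 (snd (snd z))) differentiable (at p within ?C)"
      using curve_diff[where r="\<lambda>z. 0" and t="\<lambda>z. snd (snd z)" and x="\<lambda>z. b0" and y="\<lambda>z. b1" and p=p and S="?C",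
          OF sR sI _ dT] Wz pC by (simp add: def_\<beta>0)
    have d1: "(\<lambda>z::real \<times> real \<times> real. \<beta>1 (snd (snd z))) differentiable (at p within ?C)"
      using curve_diff[where r="\<lambda>z. r1 (snd (snd z))" and t="\<lambda>z. snd (snd z)" and x="\<lambda>z. b1" and y="\<lambda>z. b2" and p=p and S="?C",
          OF sR sI dr1 dT] Wz pC by (simp add: def_\<beta>1)
    have d2: "(\<lambda>z::real \<times> real \<times> real. \<beta>2 (snd (snd z))) differentiable (at p within ?C)"
      using curve_diff[where r="\<lambda>z. 1" and t="\<lambda>z. snd (snd z)" and x="\<lambda>z. b2" and y="\<lambda>z. b3" and p=p and S="?C",
          OF sR sI _ dT] Wz pC by (simp add: def_\<beta>2)
    have d01: "(\<lambda>z::real \<times> real \<times> real. \<beta>01 (fst (snd z)) (snd (snd z))) differentiable (at p within ?C)"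
      using curve_diff[where r="\<lambda>z. r01 (fst (snd z)) (snd (snd z))" and t="\<lambda>z. fst (snd z)"
          and x="\<lambda>z. \<beta>0 (snd (snd z))" and y="\<lambda>z. \<beta>1 (snd (snd z))" and p=p and S="?C",
          OF sR sI dr01 dS d0 d1] Wz pC by (simp add: def_\<beta>01)
    have d12: "(\<lambda>z::real \<times> real \<times> real. \<beta>12 (fst (snd z)) (snd (snd z))) differentiable (at p within ?C)"
      using curve_diff[where r="\<lambda>z. r12 (fst (snd z)) (snd (snd z))" and t="\<lambda>z. fst (snd z)"
          and x="\<lambda>z. \<beta>1 (snd (snd z))" and y="\<lambda>z. \<beta>2 (snd (snd z))" and p=p and S="?C",
          OF sR sI dr12 dS d1 d2] Wz pC by (simp add: def_\<beta>12)
    show ?thesis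
      using curve_diff[where r="\<lambda>z. r012 (fst z) (fst (snd z)) (snd (snd z))" and t="\<lambda>z. fst z"
          and x="\<lambda>z. \<beta>01 (fst (snd z)) (snd (snd z))" and y="\<lambda>z. \<beta>12 (fst (snd z)) (snd (snd z))" and p=p and S="?C",
          OF sR sI dr012 dU d01 d12] Wz pC by (simp add: def_\<beta>012)
  qed
  have dbeta0: "(\<beta> has_vector_derivative 3 *\<^sub>R Rinv b0 b1) (at 0 within {0..1})"
  proof -
    obtain L where L: "((\<lambda>z. \<beta>012 (fst z) (fst (snd z)) (snd (snd z))) has_derivative L) (at (0, 0, 0) within ?C)"
      using Fdiff[of "(0, 0, 0)"] unfolding differentiable_def by auto
    show ?thesis
      using diag_deriv[OF L I01(1) _ _ _ d\<beta>0] a1 bpart unfolding def_\<beta> by simp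
  qed
  have dbeta1: "(\<beta> has_vector_derivative 3 *\<^sub>R (- Rinv b3 b2)) (at 1 within {0..1})"
  proof -
    obtain L where L: "((\<lambda>z. \<beta>012 (fst z) (fst (snd z)) (snd (snd z))) has_derivative L) (at (1, 1, 1) within ?C)"
      using Fdiff[of "(1, 1, 1)"] unfolding differentiable_def by auto
    show ?thesis
      using diag_deriv[OF L I01(2) _ _ _ d\<beta>2] a1 bpart unfolding def_\<beta> by simp
  qed
  show ?thesis
    using a0 a1 bpart c0 dbeta0 dbeta1 d\<beta>0 d\<beta>2 unfolding def_\<beta>0[symmetric] def_\<beta>2[symmetric]
    by simp
qed

end
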